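(* If there exists a $\mathcal{D}$-snake for a domino tiling system $\mathcal{D}$, then $\mathcal{D}$ is solvable.
   Context: A domino tiling system is $\mathcal{D}=(\mathrm{Col},\mathrm{T},\mathrm{white})$ with $\mathrm{Col}$ a finite set of colours, $\mathrm{T}\subseteq\mathrm{Col}^4$ a set of tiles $(c_l,c_d,c_r,c_u)$ and $\mathrm{white}\in\mathrm{Col}$; throughout, $\mathrm{T}$ contains no tile with more than two white sides. A tile is left-/down-/right-/up-border if $c_l$/$c_d$/$c_r$/$c_u$ equals white. Tiles $t=(c_l,c_d,c_r,c_u)$, $t'=(c'_l,c'_d,c'_r,c'_u)$ are H-compatible if $c_r=c'_l$ and V-compatible if $c_u=c'_d$. $\mathcal{D}$ covers $\mathbb{Z}_n\times\mathbb{Z}_m$ ($n,m$ positive) if there is $\xi:\mathbb{Z}_n\times\mathbb{Z}_m\to\mathrm{T}$ such that for all $(x,y)$ with $\xi(x,y)=(c_l,c_d,c_r,c_u)$: $x=0$ iff $c_l$ is white, $x=n-1$ iff $c_r$ is white, $y=0$ iff $c_d$ is white, $y=m-1$ iff $c_u$ is white; $\xi(x,y),\xi(x+1,y)$ are H-compatible whenever $x+1<n$; $\xi(x,y),\xi(x,y+1)$ are V-compatible whenever $y+1<m$. $\mathcal{D}$ is solvable if it covers some $\mathbb{Z}_n\times\mathbb{Z}_m$. Use a role name $r$, individual names $\mathsf{ld},\mathsf{rd},\mathsf{lu},\mathsf{ru}$ (the named ones) and concept names $C_t$ ($t\in\mathrm{T}$); an element carries $t$ if it lies in $C_t^{\mathcal{I}}$.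 An interpretation $\mathcal{I}$ is a $\mathcal{D}$-snake if: (SPath) there is an $r^+$-path starting at $\mathsf{ld}^{\mathcal{I}}$, later passing $\mathsf{rd}^{\mathcal{I}}$, later $\mathsf{lu}^{\mathcal{I}}$ and ending at $\mathsf{ru}^{\mathcal{I}}$ (at positions $1<i<j<$ last); (SNoLoop) no named element $r^+$-reaches itself; (SUniqTil) every element $r^*$-reachable from $\mathsf{ld}^{\mathcal{I}}$ carries exactly one tile; (SSpecTil) the named elements are exactly the elements $r^*$-reachable from $\mathsf{ld}^{\mathcal{I}}$ carrying a tile with two white sides, and $\mathsf{ld}^{\mathcal{I}}$ carries a left- and down-border tile, $\mathsf{rd}^{\mathcal{I}}$ a right- and down-border tile, $\mathsf{lu}^{\mathcal{I}}$ a left- and up-border tile, $\mathsf{ru}^{\mathcal{I}}$ a right- and up-border tile; (SHori) for every element $d\neq\mathsf{ru}^{\mathcal{I}}$ that is $r^*$-reachable from $\mathsf{ld}^{\mathcal{I}}$ and carries $t=(c_l,c_d,c_r,c_u)$ there is a tile $t'=(c'_l,c'_d,c'_r,c'_u)$ carried by all $r$-successors of $d$ such that (i) $t,t'$ are H-compatible, (ii) if $c_d$ is white then ($c_r$ is not white iff $c'_d$ is white), (iii) if $c_u$ is white then $c'_u$ is white; (SLen) there is a unique positive integer $N$ such that all $r^+$-paths from $\mathsf{ld}^{\mathcal{I}}$ to $\mathsf{rd}^{\mathcal{I}}$ have length $N-1$, and $\mathsf{rd}^{\mathcal{I}}$ is the only element $r^{N-1}$-reachable from $\mathsf{ld}^{\mathcal{I}}$;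 (SVerti) for every element $d$ $r^*$-reachable from $\mathsf{ld}^{\mathcal{I}}$ carrying a tile $t$ that is not up-border, there is a tile $t'$ carried by all elements $r^N$-reachable from $d$ (with $N$ from (SLen)) such that $t,t'$ are V-compatible and $t$ is left-border (resp. right-border) iff $t'$ is. Path length is the number of edges. *)

theory Defs
  imports Main
begin

type_synonym 'c tile = "'c \<times> 'c \<times> 'c \<times> 'c"

definition cl :: "'c tile \<Rightarrow> 'c" where "cl t = (case t of (a,b,c,d) \<Rightarrow> a)"
definition cd :: "'c tile \<Rightarrow> 'c" where "cd t = (case t of (a,b,c,d) \<Rightarrow> b)"
definition cr :: "'c tile \<Rightarrow> 'c" where "cr t = (case t of (a,b,c,d) \<Rightarrow> c)"
definition cu :: "'c tile \<Rightarrow> 'c" where "cu t = (case t of (a,b,c,d) \<Rightarrow> d)"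

definition white_sides :: "'c \<Rightarrow> 'c tile \<Rightarrow> nat" where
  "white_sides w t = length (filter (\<lambda>c. c = w) [cl t, cd t, cr t, cu t])"

definition domino_system :: "'c set \<Rightarrow> 'c tile set \<Rightarrow> 'c \<Rightarrow> bool" where
  "domino_system Col T w \<longleftrightarrow> finite Col \<and> w \<in> Col \<and>
     (\<forall>t\<in>T. cl t \<in> Col \<and> cd t \<in> Col \<and> cr t \<in> Col \<and> cu t \<in> Col) \<and>
     (\<forall>t\<in>T. white_sides w t \<le> 2)"

definition H_compat :: "'c tile \<Rightarrow> 'c tile \<Rightarrow> bool" where
  "H_compat t t' \<longleftrightarrow> cr t = cl t'"

definition V_compat :: "'c tile \<Rightarrow> 'c tile \<Rightarrow> bool" where
  "V_compat t t' \<longleftrightarrow> cu t = cd t'"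

definition covers :: "'c tile set \<Rightarrow> 'c \<Rightarrow> nat \<Rightarrow> nat \<Rightarrow> bool" where
  "covers T w n m \<longleftrightarrow> (\<exists>\<xi> :: nat \<times> nat \<Rightarrow> 'c tile.
     \<forall>x<n. \<forall>y<m. \<xi> (x,y) \<in> T \<and>
       (x = 0 \<longleftrightarrow> cl (\<xi> (x,y)) = w) \<and>
       (x = n - 1 \<longleftrightarrow> cr (\<xi> (x,y)) = w) \<and>
       (y = 0 \<longleftrightarrow> cd (\<xi> (x,y)) = w) \<and>
       (y = m - 1 \<longleftrightarrow> cu (\<xi> (x,y)) = w) \<and>
       (x + 1 < n \<longrightarrow> H_compat (\<xi> (x,y)) (\<xi> (x+1,y))) \<and>
       (y + 1 < m \<longrightarrow> V_compat (\<xi> (x,y)) (\<xi> (x,y+1))))"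

definition solvable :: "'c tile set \<Rightarrow> 'c \<Rightarrow> bool" where
  "solvable T w \<longleftrightarrow> (\<exists>n m. 0 < n \<and> 0 < m \<and> covers T w n m)"

text \<open>Interpretations: the domain is the type 'd; r is the role, ld rd lu ru the named individuals,
  C t the extension of the concept name C_t (only for t \<in> T).\<close>
definition carries :: "'c tile set \<Rightarrow> ('c tile \<Rightarrow> 'd set) \<Rightarrow> 'd \<Rightarrow> 'c tile \<Rightarrow> bool" where
  "carries T C d t \<longleftrightarrow> t \<in> T \<and> d \<in> C t"

definition snake :: "'c tile set \<Rightarrow> 'c \<Rightarrow> ('d \<times> 'd) set \<Rightarrow> 'd \<Rightarrow> 'd \<Rightarrow> 'd \<Rightarrow> 'd
                      \<Rightarrow> ('c tile \<Rightarrow> 'd set) \<Rightarrow> bool" where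
  "snake T w r ld rd lu ru C \<longleftrightarrow>
    \<comment> \<open>SPath\<close>
    (\<exists>p i j. 0 < i \<and> i < j \<and> j < length p - 1 \<and>
        (\<forall>k. k + 1 < length p \<longrightarrow> (p ! k, p ! (k+1)) \<in> r) \<and>
        p ! 0 = ld \<and> p ! i = rd \<and> p ! j = lu \<and> p ! (length p - 1) = ru) \<and>
    \<comment> \<open>SNoLoop\<close>
    (\<forall>a\<in>{ld, rd, lu, ru}. (a, a) \<notin> r\<^sup>+) \<and>
    \<comment> \<open>SUniqTil\<close>
    (\<forall>d. (ld, d) \<in> r\<^sup>* \<longrightarrow> (\<exists>!t. carries T C d t)) \<and>
    \<comment> \<open>SSpecTil\<close>
    ({d. (ld, d) \<in> r\<^sup>* \<and> (\<exists>t. carries T C d t \<and> white_sides w t = 2)} = {ld, rd, lu, ru}) \<and>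
    (\<exists>t. carries T C ld t \<and> cl t = w \<and> cd t = w) \<and>
    (\<exists>t. carries T C rd t \<and> cr t = w \<and> cd t = w) \<and>
    (\<exists>t. carries T C lu t \<and> cl t = w \<and> cu t = w) \<and>
    (\<exists>t. carries T C ru t \<and> cr t = w \<and> cu t = w) \<and>
    \<comment> \<open>SHori\<close>
    (\<forall>d t. d \<noteq> ru \<and> (ld, d) \<in> r\<^sup>* \<and> carries T C d t \<longrightarrow>
       (\<exists>t'\<in>T. (\<forall>e. (d, e) \<in> r \<longrightarrow> carries T C e t') \<and>
          H_compat t t' \<and>
          (cd t = w \<longrightarrow> (cr t \<noteq> w \<longleftrightarrow> cd t' = w)) \<and>
          (cu t = w \<longrightarrow> cu t' = w))) \<and>
    \<comment> \<open>SLen and SVerti\<close>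
    (let P = (\<lambda>N::nat. 0 < N \<and>
                (\<forall>n. 0 < n \<and> (ld, rd) \<in> r ^^ n \<longrightarrow> n = N - 1) \<and>
                {d. (ld, d) \<in> r ^^ (N - 1)} = {rd})
     in \<exists>N. P N \<and> (\<forall>M. P M \<longrightarrow> M = N) \<and>
        (\<forall>d t. (ld, d) \<in> r\<^sup>* \<and> carries T C d t \<and> cu t \<noteq> w \<longrightarrow>
           (\<exists>t'\<in>T. (\<forall>e. (d, e) \<in> r ^^ N \<longrightarrow> carries T C e t') \<and>
              V_compat t t' \<and>
              (cl t = w \<longleftrightarrow> cl t' = w) \<and> (cr t = w \<longleftrightarrow> cr t' = w))))"

end

theory Submission
  imports Defs
begin

lemma ws_eq: "white_sides w t = (if cl t = w then 1 else 0) + (if cd t = w then 1 else 0)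
   + (if cr t = w then 1 else 0) + (if cu t = w then (1::nat) else 0)"
  by (simp add: white_sides_def)

lemma comb:
  fixes t :: "nat \<Rightarrow> 'c tile"
  assumes N2: "2 \<le> N" and jN: "N - 1 < j" and jL: "j < L"
    and ws: "\<And>k. k \<le> L \<Longrightarrow> white_sides w (t k) \<le> 2"
    and spec: "\<And>k. k \<le> L \<Longrightarrow> white_sides w (t k) = 2 \<longleftrightarrow> k \<in> {0, N-1, j, L}"
    and t0: "cl (t 0) = w" "cd (t 0) = w"
    and tN: "cr (t (N-1)) = w" "cd (t (N-1)) = w"
    and tj: "cl (t j) = w" "cu (t j) = w"
    and tL: "cr (t L) = w" "cu (t L) = w"
    and H: "\<And>k. k < L \<Longrightarrow> H_compat (t k) (t (k+1)) \<and>
              (cd (t k) = w \<longrightarrow> (cr (t k) \<noteq> w \<longleftrightarrow> cd (t (k+1)) = w)) \<and>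
              (cu (t k) = w \<longrightarrow> cu (t (k+1)) = w)"
    and V: "\<And>k. k + N \<le> L \<Longrightarrow> cu (t k) \<noteq> w \<Longrightarrow> V_compat (t k) (t (k+N)) \<and>
              (cl (t k) = w \<longleftrightarrow> cl (t (k+N)) = w) \<and> (cr (t k) = w \<longleftrightarrow> cr (t (k+N)) = w)"
    and inT: "\<And>k. k \<le> L \<Longrightarrow> t k \<in> T"
  shows "solvable T w"
proof -
  have row0: "cd (t k) = w \<and> (cl (t k) = w \<longleftrightarrow> k = 0) \<and> (cr (t k) = w \<longleftrightarrow> k = N-1) \<and> cu (t k) \<noteq> w"
    if "k < N" for k
    using that
  proof (induction k)
    case 0
    have "white_sides w (t 0) \<le> 2" using ws[of 0] jL by simp
    then show ?case using t0 N2 by (auto simp: ws_eq split: if_splits)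
  next
    case (Suc k)
    have IH: "cd (t k) = w" "cr (t k) \<noteq> w" using Suc by auto
    have kL: "k < L" using Suc jN jL by auto
    have a: "cd (t (Suc k)) = w" using H[OF kL] IH by simp
    have b: "cl (t (Suc k)) \<noteq> w" using H[OF kL] IH by (simp add: H_compat_def)
    have wsk: "white_sides w (t (Suc k)) \<le> 2" using ws[of "Suc k"] kL by simp
    show ?case
    proof (cases "Suc k = N - 1")
      case True
      then show ?thesis using wsk tN a b by (auto simp: ws_eq split: if_splits)
    next
      case False
      have "white_sides w (t (Suc k)) \<noteq> 2" using spec[of "Suc k"] False kL jN jL Suc.prems by auto
      then show ?thesis using wsk a b False by (auto simp: ws_eq split: if_splits)
    qed
  qed
  define u where "u = (LEAST k. cu (t k) = w)"
  have cuu: "cu (t u) = w" unfolding u_def by (rule LeastI[of _ j], rule tj(2))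
  have uj: "u \<le> j" unfolding u_def by (rule Least_le, rule tj(2))
  have below: "k < u \<Longrightarrow> cu (t k) \<noteq> w" for k unfolding u_def using not_less_Least by blast
  have uN: "N \<le> u" using row0[of u] cuu by (cases "u < N") auto
  have above: "u \<le> k \<Longrightarrow> k \<le> L \<Longrightarrow> cu (t k) = w" for k
  proof (induction k rule: dec_induct)
    case base then show ?case using cuu by simp
  next
    case (step m) then show ?case using H[of m] by simp
  qed
  have top: "u \<le> k \<Longrightarrow> k \<le> L \<Longrightarrow> (cl (t k) = w \<longrightarrow> k = j) \<and> (cr (t k) = w \<longrightarrow> k = L) \<and> cd (t k) \<noteq> w" for k
  proof -
    assume a: "u \<le> k" "k \<le> L"
    have c: "cu (t k) = w" using above a by simp
    show ?thesis
    proof (cases "k = j \<or> k = L")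
      case True
      then show ?thesis using ws[of k] a tj tL jL by (auto simp: ws_eq split: if_splits)
    next
      case False
      have "white_sides w (t k) \<noteq> 2" using spec[of k] False a uN N2 by auto
      then show ?thesis using ws[of k] a c False by (auto simp: ws_eq split: if_splits)
    qed
  qed
  have ju: "j = u"
  proof (rule ccontr)
    assume "j \<noteq> u"
    then have "u \<le> j - 1" "j - 1 < L" using uj jL by auto
    then have "cr (t (j-1)) \<noteq> w" using top[of "j-1"] by auto
    moreover have "H_compat (t (j-1)) (t j)" using H[of "j-1"] \<open>j-1 < L\<close> \<open>u \<le> j-1\<close> uN N2 by auto
    ultimately show False using tj by (simp add: H_compat_def)
  qed
  have pat: "k \<le> L \<Longrightarrow> k < u + N \<Longrightarrow> (cl (t k) = w \<longleftrightarrow> k mod N = 0) \<and> (cr (t k) = w \<longleftrightarrow> k mod N = N-1)" for k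
  proof (induction k rule: less_induct)
    case (less k)
    show ?case
    proof (cases "k < N")
      case True then show ?thesis using row0[of k] by simp
    next
      case False
      have kk: "k - N + N = k" using False by simp
      have "cu (t (k-N)) \<noteq> w" using below[of "k-N"] less.prems False by auto
      then have "(cl (t (k-N)) = w \<longleftrightarrow> cl (t k) = w) \<and> (cr (t (k-N)) = w \<longleftrightarrow> cr (t k) = w)"
        using V[of "k-N"] kk less.prems by simp
      moreover have "(k - N) mod N = k mod N" using False by (simp add: mod_if)
      moreover have "k - N < k" using False N2 by simp
      ultimately show ?thesis using less.IH[of "k-N"] less.prems by auto
    qed
  qed
  have umod: "u mod N = 0" using pat[of u] tj ju jL N2 by auto
  then obtain q where q: "u = N * q" by auto
  have Lu: "L = u + N - 1"
  proof (cases "u + N - 1 \<le> L")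
    case True
    have e: "u + N - 1 = (N - 1) + q * N" using q N2 by (simp add: mult.commute)
    have "(u + N - 1) mod N = N - 1" unfolding e mod_mult_self1 using N2 by simp
    then have "cr (t (u+N-1)) = w" using pat[of "u+N-1"] True N2 by auto
    then show ?thesis using top[of "u+N-1"] True N2 by auto
  next
    case False
    have e: "L = (L - u) + q * N" using q jL ju by simp
    have e2: "(L - u) mod N = L - u" using False N2 by (intro mod_less) linarith
    have "L mod N = ((L - u) + q * N) mod N" using e by simp
    then have "L mod N = L - u" using e2 by (simp only: mod_mult_self1)
    then have "L mod N < N - 1" using False jL ju by auto
    moreover have "L mod N = N - 1" using pat[of L] tL False by auto
    ultimately show ?thesis by simp
  qed
  have cdp: "k \<le> L \<Longrightarrow> cd (t k) = w \<longleftrightarrow> k < N" for k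
  proof (cases "k < N")
    case True then show ?thesis using row0 by simp
  next
    case False
    assume kL: "k \<le> L"
    have kk: "k - N + N = k" using False by simp
    have "cu (t (k-N)) \<noteq> w" using below[of "k-N"] kL Lu N2 uN False by auto
    then have "V_compat (t (k-N)) (t k)" using V[of "k-N"] kk kL by simp
    then show ?thesis using \<open>cu (t (k-N)) \<noteq> w\<close> False by (simp add: V_compat_def)
  qed
  have key: "y * N + x \<le> L \<and> (y * N + x < u \<longleftrightarrow> y < q) \<and> (y * N + x < N \<longleftrightarrow> y = 0)"
    if "x < N" "y < q + 1" for x y
  proof -
    have "y * N \<le> q * N" using that by simp
    moreover have "L = q * N + N - 1" using Lu q by (simp add: mult.commute)
    ultimately have "y * N + x \<le> L" using that by linarith
    moreover have "y * N + x < u \<longleftrightarrow> y < q"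
    proof
      assume "y * N + x < u"
      then show "y < q" using q \<open>y < q + 1\<close> by (cases "y = q") (auto simp: mult.commute)
    next
      assume "y < q"
      then have "(y + 1) * N \<le> q * N" by (intro mult_le_mono1) simp
      then show "y * N + x < u" using q \<open>x < N\<close> by (simp add: mult.commute)
    qed
    moreover have "y * N + x < N \<longleftrightarrow> y = 0"
    proof
      assume "y * N + x < N"
      then show "y = 0" by (cases y) auto
    qed (use that in simp)
    ultimately show ?thesis by blast
  qed
  have "covers T w N (q + 1)"
    unfolding covers_def
  proof (intro exI[of _ "\<lambda>(x, y). t (y * N + x)"] allI impI)
    fix x y assume x: "x < N" and y: "y < q + 1"
    define k where "k = y * N + x"
    have K: "k \<le> L" "k < u \<longleftrightarrow> y < q" "k < N \<longleftrightarrow> y = 0" using key[OF x y] unfolding k_def by auto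
    have km: "k mod N = x" unfolding k_def using x by simp
    have ku: "k < u + N" using K Lu N2 by simp
    have P: "(cl (t k) = w \<longleftrightarrow> x = 0) \<and> (cr (t k) = w \<longleftrightarrow> x = N - 1)" using pat[OF K(1) ku] km by simp
    have Q: "cd (t k) = w \<longleftrightarrow> y = 0" using cdp[OF K(1)] K by simp
    have R: "cu (t k) = w \<longleftrightarrow> y = q + 1 - 1"
      using K above[of k] below[of k] y by (cases "k < u") auto
    have S: "x + 1 < N \<longrightarrow> H_compat (t k) (t (k + 1))"
    proof
      assume "x + 1 < N"
      then have "k + 1 \<le> L" using key[of "x+1" y] y unfolding k_def by simp
      then show "H_compat (t k) (t (k + 1))" using H[of k] by simp
    qed
    have U: "y + 1 < q + 1 \<longrightarrow> V_compat (t k) (t (k + N))"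
    proof
      assume "y + 1 < q + 1"
      then have "k + N \<le> L" "k < u" using key[of x "y+1"] x K unfolding k_def by (auto simp: algebra_simps)
      then show "V_compat (t k) (t (k + N))" using V[of k] below[of k] by simp
    qed
    have kk: "(y + 1) * N + x = k + N" "y * N + (x + 1) = k + 1" unfolding k_def by simp_all
    show "(case (x, y) of (x, y) \<Rightarrow> t (y * N + x)) \<in> T \<and>
       (x = 0) = (cl (case (x, y) of (x, y) \<Rightarrow> t (y * N + x)) = w) \<and>
       (x = N - 1) = (cr (case (x, y) of (x, y) \<Rightarrow> t (y * N + x)) = w) \<and>
       (y = 0) = (cd (case (x, y) of (x, y) \<Rightarrow> t (y * N + x)) = w) \<and>
       (y = q + 1 - 1) = (cu (case (x, y) of (x, y) \<Rightarrow> t (y * N + x)) = w) \<and>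
       (x + 1 < N \<longrightarrow>
        H_compat (case (x, y) of (x, y) \<Rightarrow> t (y * N + x))
         (case (x + 1, y) of (x, y) \<Rightarrow> t (y * N + x))) \<and>
       (y + 1 < q + 1 \<longrightarrow>
        V_compat (case (x, y) of (x, y) \<Rightarrow> t (y * N + x))
         (case (x, y + 1) of (x, y) \<Rightarrow> t (y * N + x)))"
      unfolding prod.case kk k_def[symmetric] using P Q R S U inT[OF K(1)] by auto
  qed
  then show ?thesis unfolding solvable_def using N2 by (intro exI[of _ N] exI[of _ "q+1"]) auto
qed

theorem lemma4p4:
  fixes Col :: "'c set" and T :: "'c tile set" and w :: 'c
    and r :: "('d \<times> 'd) set" and ld rd lu ru :: 'd and C :: "'c tile \<Rightarrow> 'd set"
  assumes "domino_system Col T w"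
    and "snake T w r ld rd lu ru C"
  shows "solvable T w"
proof -
  have wsT: "t \<in> T \<Longrightarrow> white_sides w t \<le> 2" for t using assms(1) unfolding domino_system_def by auto
  note S = assms(2)[unfolded snake_def Let_def]
  note S1 = S[THEN conjunct1]
  note S2 = S[THEN conjunct2, THEN conjunct1]
  note S3 = S[THEN conjunct2, THEN conjunct2, THEN conjunct1]
  note S4 = S[THEN conjunct2, THEN conjunct2, THEN conjunct2, THEN conjunct1]
  note S5 = S[THEN conjunct2, THEN conjunct2, THEN conjunct2, THEN conjunct2, THEN conjunct1]
  note S6 = S[THEN conjunct2, THEN conjunct2, THEN conjunct2, THEN conjunct2, THEN conjunct2, THEN conjunct1]
  note S7 = S[THEN conjunct2, THEN conjunct2, THEN conjunct2, THEN conjunct2, THEN conjunct2, THEN conjunct2, THEN conjunct1]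
  note S8 = S[THEN conjunct2, THEN conjunct2, THEN conjunct2, THEN conjunct2, THEN conjunct2, THEN conjunct2, THEN conjunct2, THEN conjunct1]
  note S9 = S[THEN conjunct2, THEN conjunct2, THEN conjunct2, THEN conjunct2, THEN conjunct2, THEN conjunct2, THEN conjunct2, THEN conjunct2, THEN conjunct1]
  note S10 = S[THEN conjunct2, THEN conjunct2, THEN conjunct2, THEN conjunct2, THEN conjunct2, THEN conjunct2, THEN conjunct2, THEN conjunct2, THEN conjunct2]
  obtain p i j where pij: "0 < i" "i < j" "j < length p - 1"
      and pr: "\<forall>k. k + 1 < length p \<longrightarrow> (p ! k, p ! (k+1)) \<in> r"
      and p0: "p ! 0 = ld" and pi: "p ! i = rd" and pj: "p ! j = lu" and pL: "p ! (length p - 1) = ru"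
    using S1 by (elim exE conjE) blast
  define L where "L = length p - 1"
  have noloop: "\<forall>a\<in>{ld, rd, lu, ru}. (a, a) \<notin> r\<^sup>+" by (rule S2)
  have uniq: "\<And>d. (ld, d) \<in> r\<^sup>* \<Longrightarrow> \<exists>!t. carries T C d t" using S3 by blast
  have specset: "{d. (ld, d) \<in> r\<^sup>* \<and> (\<exists>t. carries T C d t \<and> white_sides w t = 2)} = {ld, rd, lu, ru}"
    by (rule S4)
  have c_ld: "\<exists>t. carries T C ld t \<and> cl t = w \<and> cd t = w" by (rule S5)
  have c_rd: "\<exists>t. carries T C rd t \<and> cr t = w \<and> cd t = w" by (rule S6)
  have c_lu: "\<exists>t. carries T C lu t \<and> cl t = w \<and> cu t = w" by (rule S7)
  have c_ru: "\<exists>t. carries T C ru t \<and> cr t = w \<and> cu t = w" by (rule S8)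
  have hori: "\<And>d t. d \<noteq> ru \<Longrightarrow> (ld, d) \<in> r\<^sup>* \<Longrightarrow> carries T C d t \<Longrightarrow>
       (\<exists>t'\<in>T. (\<forall>e. (d, e) \<in> r \<longrightarrow> carries T C e t') \<and>
          H_compat t t' \<and>
          (cd t = w \<longrightarrow> (cr t \<noteq> w \<longleftrightarrow> cd t' = w)) \<and>
          (cu t = w \<longrightarrow> cu t' = w))" using S9 by blast
  obtain N where NP: "0 < N" "\<forall>n. 0 < n \<and> (ld, rd) \<in> r ^^ n \<longrightarrow> n = N - 1"
     and verti0: "\<forall>d t. (ld, d) \<in> r\<^sup>* \<and> carries T C d t \<and> cu t \<noteq> w \<longrightarrow>
           (\<exists>t'\<in>T. (\<forall>e. (d, e) \<in> r ^^ N \<longrightarrow> carries T C e t') \<and>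
              V_compat t t' \<and>
              (cl t = w \<longleftrightarrow> cl t' = w) \<and> (cr t = w \<longleftrightarrow> cr t' = w))"
    using S10 by (elim exE conjE) blast
  have verti: "\<And>d t. (ld, d) \<in> r\<^sup>* \<Longrightarrow> carries T C d t \<Longrightarrow> cu t \<noteq> w \<Longrightarrow>
           (\<exists>t'\<in>T. (\<forall>e. (d, e) \<in> r ^^ N \<longrightarrow> carries T C e t') \<and>
              V_compat t t' \<and>
              (cl t = w \<longleftrightarrow> cl t' = w) \<and> (cr t = w \<longleftrightarrow> cr t' = w))" using verti0 by blast
  have path: "a \<le> b \<Longrightarrow> b \<le> L \<Longrightarrow> (p ! a, p ! b) \<in> r ^^ (b - a)" for a b
  proof (induction b rule: dec_induct)
    case base then show ?case by simp
  next
    case (step m)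
    then have "(p ! m, p ! Suc m) \<in> r" using pr L_def pij by auto
    moreover have "Suc m - a = Suc (m - a)" using step by simp
    ultimately show ?case using step by auto
  qed
  have reach: "k \<le> L \<Longrightarrow> (ld, p ! k) \<in> r\<^sup>*" for k
    using path[of 0 k] p0 relpow_imp_rtrancl by fastforce
  have plus: "a < b \<Longrightarrow> b \<le> L \<Longrightarrow> (p ! a, p ! b) \<in> r\<^sup>+" for a b
    using path[of a b] trancl_power zero_less_diff less_imp_le by metis
  have named_uniq: "a \<le> L \<Longrightarrow> b \<le> L \<Longrightarrow> p ! a = p ! b \<Longrightarrow> p ! a \<in> {ld, rd, lu, ru} \<Longrightarrow> a = b" for a b
  proof (rule ccontr)
    assume h: "a \<le> L" "b \<le> L" "p ! a = p ! b" "p ! a \<in> {ld, rd, lu, ru}" "a \<noteq> b"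
    then have "(p ! a, p ! a) \<in> r\<^sup>+" using plus[of a b] plus[of b a] by (cases "a < b") auto
    then show False using noloop h(4) by blast
  qed
  define tt where "tt k = (THE t. carries T C (p ! k) t)" for k
  have tl_c: "k \<le> L \<Longrightarrow> carries T C (p ! k) (tt k)" for k
    unfolding tt_def using uniq[OF reach[of k]] by (metis theI')
  have tl_u: "k \<le> L \<Longrightarrow> carries T C (p ! k) t \<Longrightarrow> t = tt k" for k t
    using uniq[OF reach[of k]] tl_c[of k] by blast
  have iN: "i = N - 1" using NP(2) path[of 0 i] pij p0 pi L_def by auto
  have N2: "2 \<le> N" using iN pij NP by linarith
  have iL: "i \<le> L" "j \<le> L" using pij L_def by auto
  have sp: "white_sides w (tt k) = 2 \<longleftrightarrow> k \<in> {0, N-1, j, L}" if k: "k \<le> L" for k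
  proof
    assume "white_sides w (tt k) = 2"
    then have "p ! k \<in> {ld, rd, lu, ru}" using specset reach[OF k] tl_c[OF k] by blast
    then show "k \<in> {0, N-1, j, L}"
      using named_uniq[of k 0] named_uniq[of k i] named_uniq[of k j] named_uniq[of k L]
        k iL p0 pi pj pL L_def iN by auto
  next
    assume "k \<in> {0, N-1, j, L}"
    then have "p ! k \<in> {ld, rd, lu, ru}" using p0 pi pj pL L_def iN by auto
    then obtain t where "carries T C (p ! k) t" "white_sides w t = 2" using specset by blast
    then show "white_sides w (tt k) = 2" using tl_u[OF k] by auto
  qed
  have t0: "cl (tt 0) = w" "cd (tt 0) = w" using c_ld tl_u[of 0] p0 by auto
  have tN: "cr (tt (N-1)) = w" "cd (tt (N-1)) = w" using c_rd tl_u[of i] pi iL iN by auto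
  have tj: "cl (tt j) = w" "cu (tt j) = w" using c_lu tl_u[of j] pj iL by auto
  have tL: "cr (tt L) = w" "cu (tt L) = w" using c_ru tl_u[of L] pL L_def by auto
  have inT: "k \<le> L \<Longrightarrow> tt k \<in> T" for k using tl_c[of k] by (simp add: carries_def)
  show ?thesis
  proof (rule comb[of N j L w tt])
    show "2 \<le> N" by (rule N2)
    show "N - 1 < j" "j < L" using iN pij L_def by auto
    show "\<And>k. k \<le> L \<Longrightarrow> white_sides w (tt k) \<le> 2" using wsT inT by blast
    show "\<And>k. k \<le> L \<Longrightarrow> white_sides w (tt k) = 2 \<longleftrightarrow> k \<in> {0, N-1, j, L}" by (rule sp)
    show "cl (tt 0) = w" "cd (tt 0) = w" by (rule t0)+
    show "cr (tt (N-1)) = w" "cd (tt (N-1)) = w" by (rule tN)+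
    show "cl (tt j) = w" "cu (tt j) = w" by (rule tj)+
    show "cr (tt L) = w" "cu (tt L) = w" by (rule tL)+
    show "\<And>k. k \<le> L \<Longrightarrow> tt k \<in> T" by (rule inT)
  next
    fix k assume k: "k < L"
    have ne: "p ! k \<noteq> ru" using named_uniq[of k L] k pL L_def by auto
    obtain t' where t': "\<forall>e. (p ! k, e) \<in> r \<longrightarrow> carries T C e t'" "H_compat (tt k) t'"
          "cd (tt k) = w \<longrightarrow> (cr (tt k) \<noteq> w \<longleftrightarrow> cd t' = w)" "cu (tt k) = w \<longrightarrow> cu t' = w"
      using hori[OF ne reach tl_c] k by fastforce
    have "(p ! k, p ! (k+1)) \<in> r" using pr k L_def by auto
    then have "t' = tt (k+1)" using t'(1) tl_u[of "k+1"] k by auto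
    then show "H_compat (tt k) (tt (k+1)) \<and>
              (cd (tt k) = w \<longrightarrow> (cr (tt k) \<noteq> w \<longleftrightarrow> cd (tt (k+1)) = w)) \<and>
              (cu (tt k) = w \<longrightarrow> cu (tt (k+1)) = w)" using t' by auto
  next
    fix k assume k: "k + N \<le> L" "cu (tt k) \<noteq> w"
    obtain t' where t': "\<forall>e. (p ! k, e) \<in> r ^^ N \<longrightarrow> carries T C e t'" "V_compat (tt k) t'"
              "(cl (tt k) = w \<longleftrightarrow> cl t' = w)" "(cr (tt k) = w \<longleftrightarrow> cr t' = w)"
      using verti[OF reach tl_c k(2)] k(1) by fastforce
    have "(p ! k, p ! (k+N)) \<in> r ^^ N" using path[of k "k+N"] k by auto
    then have "t' = tt (k+N)" using t'(1) tl_u[of "k+N"] k by auto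
    then show "V_compat (tt k) (tt (k+N)) \<and>
              (cl (tt k) = w \<longleftrightarrow> cl (tt (k+N)) = w) \<and> (cr (tt k) = w \<longleftrightarrow> cr (tt (k+N)) = w)"
      using t' by auto
  qed
qed

end
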